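(* $$\sum_{n\ge0}|\mathfrak S_n(1243,2143,231)|x^n=1+x\frac{(x-1)^2}{(2x-1)^2},$$ and consequently $|\mathfrak S_n(1243,2143,231)|=(n+2)2^{n-3}$ for all $n\ge2$.
   Context: $\mathfrak S_n(R)$ is the set of permutations of $\{1,\dots,n\}$ avoiding every pattern in $R$, where $\pi$ avoids $\sigma$ if no subsequence of $\pi$ has the same relative order as $\sigma$. *)

theory Defs
  imports Main "HOL-Computational_Algebra.Formal_Power_Series"
begin

definition perms :: "nat \<Rightarrow> nat list set" where
  "perms n = {p. distinct p \<and> set p = {1..n}}"

definition contains :: "nat list \<Rightarrow> nat list \<Rightarrow> bool" where
  "contains p s \<longleftrightarrow> (\<exists>f. strict_mono_on {..<length s} f
      \<and> (\<forall>a<length s. f a < length p)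
      \<and> (\<forall>a<length s. \<forall>b<length s. (p ! f a < p ! f b) \<longleftrightarrow> (s ! a < s ! b)))"

definition avoids :: "nat list \<Rightarrow> nat list \<Rightarrow> bool" where
  "avoids p s \<longleftrightarrow> \<not> contains p s"

definition Av :: "nat \<Rightarrow> nat list set \<Rightarrow> nat list set" where
  "Av n R = {p \<in> perms n. \<forall>s\<in>R. avoids p s}"

end

theory Submission
  imports Defs "HOL-Library.Sublist"
begin


lemma subseq_idx1:
  "subseq xs ys \<Longrightarrow> \<exists>f. strict_mono_on {..<length xs} f \<and> (\<forall>i<length xs. f i < length ys \<and> xs!i = ys!f i)"
proof (induction rule: list_emb.induct)
  case (list_emb_Nil ys)
  then show ?case by (auto intro: strict_mono_onI)
next
  case (list_emb_Cons xs ys y)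
  then obtain f where f: "strict_mono_on {..<length xs} f" "\<forall>i<length xs. f i < length ys \<and> xs!i = ys!f i" by blast
  show ?case
    apply (rule exI[of _ "Suc \<circ> f"])
    using f by (auto intro!: strict_mono_onI dest: strict_mono_onD)
next
  case (list_emb_Cons2 x y xs ys)
  then obtain f where f: "strict_mono_on {..<length xs} f" "\<forall>i<length xs. f i < length ys \<and> xs!i = ys!f i" by blast
  show ?case
    apply (rule exI[of _ "\<lambda>i. case i of 0 \<Rightarrow> 0 | Suc j \<Rightarrow> Suc (f j)"])
    using f list_emb_Cons2(1)
    apply (auto intro!: strict_mono_onI split: nat.splits simp: nth_Cons')
    by (rule strict_mono_onD[OF f(1)]) auto
qed

lemma subseq_idx2:
  "strict_mono_on {..<length xs} f \<Longrightarrow> (\<forall>i<length xs. f i < length ys \<and> xs!i = ys!f i) \<Longrightarrow> subseq xs ys"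
proof (induction ys arbitrary: xs f)
  case Nil
  then show ?case by (cases xs) auto
next
  case (Cons y ys)
  show ?case
  proof (cases xs)
    case Nil then show ?thesis by simp
  next
    case (Cons x xs')
    have mono: "\<And>i j. i < j \<Longrightarrow> j < length xs \<Longrightarrow> f i < f j"
      by (rule strict_mono_onD[OF Cons.prems(1)]) auto
    show ?thesis
    proof (cases "f 0 = 0")
      case True
      have "subseq xs' ys"
      proof (rule Cons.IH[of xs' "\<lambda>j. f (Suc j) - 1"])
        show "strict_mono_on {..<length xs'} (\<lambda>j. f (Suc j) - 1)"
        proof (rule strict_mono_onI)
          fix r s assume "r \<in> {..<length xs'}" "s \<in> {..<length xs'}" "r < s"
          then have "f 0 < f (Suc r)" "f (Suc r) < f (Suc s)" using mono Cons by auto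
          then show "f (Suc r) - 1 < f (Suc s) - 1" by linarith
        qed
        show "\<forall>i<length xs'. f (Suc i) - 1 < length ys \<and> xs' ! i = ys ! (f (Suc i) - 1)"
        proof (intro allI impI)
          fix i assume i: "i < length xs'"
          have "f 0 < f (Suc i)" using mono Cons i by auto
          moreover have "f (Suc i) < length (y#ys)" "xs!Suc i = (y#ys)!f (Suc i)" using Cons.prems(2) Cons i by auto
          ultimately show "f (Suc i) - 1 < length ys \<and> xs' ! i = ys ! (f (Suc i) - 1)"
            using Cons True by (cases "f (Suc i)") auto
        qed
      qed
      moreover have "x = y" using Cons.prems(2) Cons True by force
      ultimately show ?thesis using Cons by simp
    next
      case False
      have "subseq xs ys"
      proof (rule Cons.IH[of xs "\<lambda>j. f j - 1"])
        show "strict_mono_on {..<length xs} (\<lambda>j. f j - 1)"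
        proof (rule strict_mono_onI)
          fix r s assume "r \<in> {..<length xs}" "s \<in> {..<length xs}" "r < s"
          then have "f 0 \<le> f r" "f r < f s" using mono by (cases r; auto simp: le_less)+
          then show "f r - 1 < f s - 1" using False by linarith
        qed
        show "\<forall>i<length xs. f i - 1 < length ys \<and> xs ! i = ys ! (f i - 1)"
        proof (intro allI impI)
          fix i assume i: "i < length xs"
          have "f 0 \<le> f i" using mono i by (cases i) (auto simp: le_less)
          moreover have "f i < length (y#ys)" "xs!i = (y#ys)!f i" using Cons.prems(2) i by auto
          ultimately show "f i - 1 < length ys \<and> xs ! i = ys ! (f i - 1)"
            using False by (cases "f i") auto
        qed
      qed
      then show ?thesis by auto
    qed
  qed
qed

lemma contains_iff:
  "contains p s \<longleftrightarrow> (\<exists>xs. subseq xs p \<and> length xs = length s \<and>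
      (\<forall>a<length s. \<forall>b<length s. (xs!a < xs!b) \<longleftrightarrow> (s!a < s!b)))"
proof
  assume "contains p s"
  then obtain f where f: "strict_mono_on {..<length s} f" "\<forall>a<length s. f a < length p"
    "\<forall>a<length s. \<forall>b<length s. (p ! f a < p ! f b) \<longleftrightarrow> (s ! a < s ! b)"
    unfolding contains_def by blast
  define xs where "xs = map (\<lambda>i. p ! f i) [0..<length s]"
  have "subseq xs p" by (rule subseq_idx2[of xs f]) (use f in \<open>auto simp: xs_def\<close>)
  then show "\<exists>xs. subseq xs p \<and> length xs = length s \<and>
      (\<forall>a<length s. \<forall>b<length s. (xs!a < xs!b) \<longleftrightarrow> (s!a < s!b))"
    using f by (auto simp: xs_def intro!: exI[of _ xs])
next
  assume "\<exists>xs. subseq xs p \<and> length xs = length s \<and>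
      (\<forall>a<length s. \<forall>b<length s. (xs!a < xs!b) \<longleftrightarrow> (s!a < s!b))"
  then obtain xs where xs: "subseq xs p" "length xs = length s"
     "\<forall>a<length s. \<forall>b<length s. (xs!a < xs!b) \<longleftrightarrow> (s!a < s!b)" by blast
  obtain f where "strict_mono_on {..<length xs} f" "\<forall>i<length xs. f i < length p \<and> xs!i = p!f i"
    using subseq_idx1[OF xs(1)] by blast
  then show "contains p s" unfolding contains_def using xs by (auto intro!: exI[of _ f])
qed

lemma len3: "length xs = 3 \<longleftrightarrow> (\<exists>a b c. xs = [a,b,c])"
  by (auto simp: numeral_eq_Suc length_Suc_conv)
lemma len4: "length xs = 4 \<longleftrightarrow> (\<exists>a b c d. xs = [a,b,c,d])"
  by (auto simp: numeral_eq_Suc length_Suc_conv)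

lemma c231: "contains p [2,3,1] \<longleftrightarrow> (\<exists>a b c. subseq [a,b,c] p \<and> c < a \<and> a < b)"
  unfolding contains_iff by (auto simp: length_Suc_conv numeral_eq_Suc All_less_Suc) fastforce+
lemma c132: "contains p [1,3,2] \<longleftrightarrow> (\<exists>a b c. subseq [a,b,c] p \<and> a < c \<and> c < b)"
  unfolding contains_iff by (auto simp: length_Suc_conv numeral_eq_Suc All_less_Suc) fastforce+
lemma c1243: "contains p [1,2,4,3] \<longleftrightarrow> (\<exists>a b c d. subseq [a,b,c,d] p \<and> a < b \<and> b < d \<and> d < c)"
  unfolding contains_iff by (auto simp: length_Suc_conv numeral_eq_Suc All_less_Suc) fastforce+
lemma c2143: "contains p [2,1,4,3] \<longleftrightarrow> (\<exists>a b c d. subseq [a,b,c,d] p \<and> b < a \<and> a < d \<and> d < c)"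
  unfolding contains_iff by (auto simp: length_Suc_conv numeral_eq_Suc All_less_Suc) fastforce+




definition "P231 p \<longleftrightarrow> (\<exists>a b c. subseq [a,b,c] p \<and> c < a \<and> a < (b::nat))"
definition "P132 p \<longleftrightarrow> (\<exists>a b c. subseq [a,b,c] p \<and> a < c \<and> c < (b::nat))"
definition "P1243 p \<longleftrightarrow> (\<exists>a b c d. subseq [a,b,c,d] p \<and> a < b \<and> b < d \<and> d < (c::nat))"
definition "P2143 p \<longleftrightarrow> (\<exists>a b c d. subseq [a,b,c,d] p \<and> b < a \<and> a < d \<and> d < (c::nat))"

abbreviation "AA n \<equiv> Av n {[1,2,4,3],[2,1,4,3],[2,3,1]}"
abbreviation "CC n \<equiv> Av n {[1,3,2],[2,3,1]}"

lemma cP: "contains p [1,2,4,3] \<longleftrightarrow> P1243 p" "contains p [2,1,4,3] \<longleftrightarrow> P2143 p"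
  "contains p [2,3,1] \<longleftrightarrow> P231 p" "contains p [1,3,2] \<longleftrightarrow> P132 p"
  by (simp_all only: c1243 c2143 c231 c132 P1243_def P2143_def P231_def P132_def)

lemma memA: "p \<in> AA n \<longleftrightarrow> p \<in> perms n \<and> \<not> P1243 p \<and> \<not> P2143 p \<and> \<not> P231 p"
  unfolding Av_def avoids_def by (simp only: ball_simps cP mem_Collect_eq simp_thms)
lemma memC: "p \<in> CC n \<longleftrightarrow> p \<in> perms n \<and> \<not> P132 p \<and> \<not> P231 p"
  unfolding Av_def avoids_def by (simp only: ball_simps cP mem_Collect_eq simp_thms)

lemma subseq_set: "subseq xs ys \<Longrightarrow> set xs \<subseteq> set ys"
  by (induction rule: list_emb.induct) auto

lemma subseq_Cons_iff: "subseq xs (y#ys) \<longleftrightarrow> subseq xs ys \<or> (\<exists>xs'. xs = y#xs' \<and> subseq xs' ys)"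
  by (cases xs) (auto simp: subseq_Cons')

lemma subseq_snoc_iff: "subseq xs (ys@[m]) \<longleftrightarrow> subseq xs ys \<or> (\<exists>xs'. xs = xs'@[m] \<and> subseq xs' ys)"
proof -
  have "subseq zs [m] \<longleftrightarrow> zs = [] \<or> zs = [m]" for zs
    by (cases zs) (auto simp: subseq_Cons_iff)
  then show ?thesis by (auto simp: subseq_append_iff)
qed

lemma subseq_map_inv: "subseq xs (map f ys) \<Longrightarrow> \<exists>zs. subseq zs ys \<and> xs = map f zs"
proof (induction ys arbitrary: xs)
  case Nil then show ?case by auto
next
  case (Cons y ys)
  from Cons.prems have "subseq xs (map f ys) \<or> (\<exists>xs'. xs = f y # xs' \<and> subseq xs' (map f ys))"
    by (simp add: subseq_Cons_iff)
  then show ?case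
  proof
    assume "subseq xs (map f ys)"
    then obtain zs where "subseq zs ys" "xs = map f zs" using Cons.IH by blast
    then show ?case by (auto intro!: exI[of _ zs])
  next
    assume "\<exists>xs'. xs = f y # xs' \<and> subseq xs' (map f ys)"
    then obtain xs' zs where "xs = f y # xs'" "subseq zs ys" "xs' = map f zs" using Cons.IH by blast
    then show ?case by (auto intro!: exI[of _ "y#zs"])
  qed
qed

lemma P_trans:
  assumes "subseq q p"
  shows "P231 q \<Longrightarrow> P231 p" "P132 q \<Longrightarrow> P132 p" "P1243 q \<Longrightarrow> P1243 p" "P2143 q \<Longrightarrow> P2143 p"
proof -
  have t: "subseq xs q \<Longrightarrow> subseq xs p" for xs using assms subseq_order.order_trans by blast
  show "P231 q \<Longrightarrow> P231 p" unfolding P231_def using t by blast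
  show "P132 q \<Longrightarrow> P132 p" unfolding P132_def using t by blast
  show "P1243 q \<Longrightarrow> P1243 p" unfolding P1243_def using t by blast
  show "P2143 q \<Longrightarrow> P2143 p" unfolding P2143_def using t by blast
qed

lemma P4_132: "P1243 p \<Longrightarrow> P132 p" "P2143 p \<Longrightarrow> P132 p"
proof -
  have s: "subseq [a,b,c,d] p \<Longrightarrow> subseq [b,c,d] p" for a b c d :: nat
    by (meson subseq_Cons')
  show "P1243 p \<Longrightarrow> P132 p" unfolding P1243_def P132_def
  proof (elim exE conjE)
    fix a b c d assume "subseq [a,b,c,d] p" "a < b" "b < d" "d < c"
    then show "\<exists>a b c. subseq [a,b,c] p \<and> a < c \<and> c < b" using s by blast
  qed
  show "P2143 p \<Longrightarrow> P132 p" unfolding P2143_def P132_def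
  proof (elim exE conjE)
    fix a b c d assume "subseq [a,b,c,d] p" "b < a" "a < d" "d < c"
    then have "b < d" by simp
    then show "\<exists>a b c. subseq [a,b,c] p \<and> a < c \<and> c < b" using s \<open>subseq [a,b,c,d] p\<close> \<open>d < c\<close> by blast
  qed
qed

lemma snoc3: "[a,b,c] = xs@[m] \<longleftrightarrow> xs = [a,b] \<and> c = m"
  by (cases xs rule: rev_cases) auto
lemma snoc4: "[a,b,c,d] = xs@[m] \<longleftrightarrow> xs = [a,b,c] \<and> d = m"
  by (cases xs rule: rev_cases) auto

lemma snoc_max:
  assumes m: "\<forall>x\<in>set u. x < m"
  shows "P231 (u@[m]) \<Longrightarrow> P231 u" "P132 (u@[m]) \<Longrightarrow> P132 u"
    "P1243 (u@[m]) \<Longrightarrow> P1243 u" "P2143 (u@[m]) \<Longrightarrow> P2143 u"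
proof -
  show "P231 (u@[m]) \<Longrightarrow> P231 u" unfolding P231_def
  proof (elim exE conjE)
    fix a b c assume h: "subseq [a,b,c] (u@[m])" "c < a" "a < b"
    show "\<exists>a b c. subseq [a,b,c] u \<and> c < a \<and> a < b"
    proof (cases "subseq [a,b,c] u")
      case True then show ?thesis using h by blast
    next
      case False
      then have "subseq [a,b] u" "c = m" using h(1) by (auto simp: subseq_snoc_iff snoc3)
      then have "a < m" using m subseq_set by fastforce
      then show ?thesis using h \<open>c = m\<close> by simp
    qed
  qed
  show "P132 (u@[m]) \<Longrightarrow> P132 u" unfolding P132_def
  proof (elim exE conjE)
    fix a b c assume h: "subseq [a,b,c] (u@[m])" "a < c" "c < b"
    show "\<exists>a b c. subseq [a,b,c] u \<and> a < c \<and> c < b"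
    proof (cases "subseq [a,b,c] u")
      case True then show ?thesis using h by blast
    next
      case False
      then have "subseq [a,b] u" "c = m" using h(1) by (auto simp: subseq_snoc_iff snoc3)
      then have "b < m" using m subseq_set by fastforce
      then show ?thesis using h \<open>c = m\<close> by simp
    qed
  qed
  show "P1243 (u@[m]) \<Longrightarrow> P1243 u" unfolding P1243_def
  proof (elim exE conjE)
    fix a b c d assume h: "subseq [a,b,c,d] (u@[m])" "a < b" "b < d" "d < c"
    show "\<exists>a b c d. subseq [a,b,c,d] u \<and> a < b \<and> b < d \<and> d < c"
    proof (cases "subseq [a,b,c,d] u")
      case True then show ?thesis using h by blast
    next
      case False
      then have "subseq [a,b,c] u" "d = m" using h(1) by (auto simp: subseq_snoc_iff snoc4)
      then have "c < m" using m subseq_set by fastforce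
      then show ?thesis using h \<open>d = m\<close> by simp
    qed
  qed
  show "P2143 (u@[m]) \<Longrightarrow> P2143 u" unfolding P2143_def
  proof (elim exE conjE)
    fix a b c d assume h: "subseq [a,b,c,d] (u@[m])" "b < a" "a < d" "d < c"
    show "\<exists>a b c d. subseq [a,b,c,d] u \<and> b < a \<and> a < d \<and> d < c"
    proof (cases "subseq [a,b,c,d] u")
      case True then show ?thesis using h by blast
    next
      case False
      then have "subseq [a,b,c] u" "d = m" using h(1) by (auto simp: subseq_snoc_iff snoc4)
      then have "c < m" using m subseq_set by fastforce
      then show ?thesis using h \<open>d = m\<close> by simp
    qed
  qed
qed

lemma cons3: "subseq [a,b,c] (m#u) \<Longrightarrow> subseq [a,b,c] u \<or> (a = m \<and> subseq [b,c] u)"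
  by (cases "a = m") simp_all
lemma cons4: "subseq [a,b,c,d] (m#u) \<Longrightarrow> subseq [a,b,c,d] u \<or> (a = m \<and> subseq [b,c,d] u)"
  by (cases "a = m") simp_all

lemma cons_max:
  assumes m: "\<forall>x\<in>set u. x < m"
  shows "P231 (m#u) \<Longrightarrow> P231 u" "P132 (m#u) \<Longrightarrow> P132 u"
    "P1243 (m#u) \<Longrightarrow> P1243 u" "P2143 (m#u) \<Longrightarrow> P2143 u"
proof -
  show "P231 (m#u) \<Longrightarrow> P231 u" unfolding P231_def
  proof (elim exE conjE)
    fix a b c assume h: "subseq [a,b,c] (m#u)" "c < a" "a < b"
    show "\<exists>a b c. subseq [a,b,c] u \<and> c < a \<and> a < b"
    proof (cases "subseq [a,b,c] u")
      case True then show ?thesis using h by blast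
    next
      case False
      then have "subseq [b,c] u" "a = m" using cons3[OF h(1)] by auto
      then have "b < m" using m subseq_set by fastforce
      then show ?thesis using h \<open>a = m\<close> by simp
    qed
  qed
  show "P132 (m#u) \<Longrightarrow> P132 u" unfolding P132_def
  proof (elim exE conjE)
    fix a b c assume h: "subseq [a,b,c] (m#u)" "a < c" "c < b"
    show "\<exists>a b c. subseq [a,b,c] u \<and> a < c \<and> c < b"
    proof (cases "subseq [a,b,c] u")
      case True then show ?thesis using h by blast
    next
      case False
      then have "subseq [b,c] u" "a = m" using cons3[OF h(1)] by auto
      then have "b < m" using m subseq_set by fastforce
      then show ?thesis using h \<open>a = m\<close> by simp
    qed
  qed
  show "P1243 (m#u) \<Longrightarrow> P1243 u" unfolding P1243_def
  proof (elim exE conjE)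
    fix a b c d assume h: "subseq [a,b,c,d] (m#u)" "a < b" "b < d" "d < c"
    show "\<exists>a b c d. subseq [a,b,c,d] u \<and> a < b \<and> b < d \<and> d < c"
    proof (cases "subseq [a,b,c,d] u")
      case True then show ?thesis using h by blast
    next
      case False
      then have "subseq [b,c,d] u" "a = m" using cons4[OF h(1)] by auto
      then have "b < m" using m subseq_set by fastforce
      then show ?thesis using h \<open>a = m\<close> by simp
    qed
  qed
  show "P2143 (m#u) \<Longrightarrow> P2143 u" unfolding P2143_def
  proof (elim exE conjE)
    fix a b c d assume h: "subseq [a,b,c,d] (m#u)" "b < a" "a < d" "d < c"
    show "\<exists>a b c d. subseq [a,b,c,d] u \<and> b < a \<and> a < d \<and> d < c"
    proof (cases "subseq [a,b,c,d] u")
      case True then show ?thesis using h by blast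
    next
      case False
      then have "subseq [b,c,d] u" "a = m" using cons4[OF h(1)] by auto
      then have "d < m" using m subseq_set by fastforce
      then show ?thesis using h \<open>a = m\<close> by simp
    qed
  qed
qed

lemma cons_min231:
  assumes m: "\<forall>x\<in>set u. m < x" and P: "P231 (m#u)"
  shows "P231 u"
proof -
  obtain a b c where h: "subseq [a,b,c] (m#u)" "c < a" "a < b" using P unfolding P231_def by blast
  show ?thesis
  proof (cases "subseq [a,b,c] u")
    case True then show ?thesis using h unfolding P231_def by blast
  next
    case False
    then have "subseq [b,c] u" "a = m" using cons3[OF h(1)] by auto
    then have "m < c" using m subseq_set by fastforce
    then show ?thesis using h \<open>a = m\<close> by simp
  qed
qed

lemma cons_4:
  assumes "P1243 (m#u) \<or> P2143 (m#u)" shows "P132 u"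
proof -
  have "\<exists>a b c d. subseq [a,b,c,d] (m#u) \<and> b < d \<and> d < c"
    using assms unfolding P1243_def P2143_def
  proof (elim disjE exE conjE)
    fix a b c d assume "subseq [a,b,c,d] (m#u)" "a < b" "b < d" "d < c"
    then show ?thesis by blast
  next
    fix a b c d assume "subseq [a,b,c,d] (m#u)" "b < a" "a < d" "d < c"
    then have "b < d" by simp
    with \<open>subseq [a,b,c,d] (m#u)\<close> \<open>d < c\<close> show ?thesis by blast
  qed
  then obtain a b c d where h: "subseq [a,b,c,d] (m#u)" "b < d" "d < c" by blast
  show ?thesis
  proof (cases "subseq [a,b,c,d] u")
    case True
    then have "subseq [b,c,d] u" by (meson subseq_Cons')
    then show ?thesis using h unfolding P132_def by blast
  next
    case False
    then have "subseq [b,c,d] u" using cons4[OF h(1)] by auto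
    then show ?thesis using h unfolding P132_def by blast
  qed
qed

lemma map_Suc_P: "P231 w \<Longrightarrow> P231 (map Suc w)" "P132 (map Suc w) \<Longrightarrow> P132 w"
proof -
  show "P231 w \<Longrightarrow> P231 (map Suc w)" unfolding P231_def
  proof (elim exE conjE)
    fix a b c assume h: "subseq [a,b,c] w" "c < a" "a < b"
    have "subseq (map Suc [a,b,c]) (map Suc w)" by (rule subseq_map) (rule h(1))
    then have "subseq [Suc a, Suc b, Suc c] (map Suc w)" by simp
    moreover have "Suc c < Suc a" "Suc a < Suc b" using h by simp_all
    ultimately show "\<exists>a b c. subseq [a,b,c] (map Suc w) \<and> c < a \<and> a < b" by blast
  qed
  show "P132 (map Suc w) \<Longrightarrow> P132 w" unfolding P132_def
  proof (elim exE conjE)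
    fix a b c assume h: "subseq [a,b,c] (map Suc w)" "a < c" "c < b"
    obtain zs where zs: "subseq zs w" "[a,b,c] = map Suc zs" using subseq_map_inv[OF h(1)] by (elim exE conjE)
    have "length zs = 3" using arg_cong[OF zs(2), of length] by simp
    then obtain a' b' c' where zz: "zs = [a',b',c']" unfolding len3 by (elim exE)
    with zs have e: "a = Suc a'" "b = Suc b'" "c = Suc c'" by simp_all
    have "subseq [a',b',c'] w" using zs zz by simp
    moreover have "a' < c'" "c' < b'" using h e by simp_all
    ultimately show "\<exists>a b c. subseq [a,b,c] w \<and> a < c \<and> c < b" by blast
  qed
qed




lemma perms_snoc: "u @ [Suc n] \<in> perms (Suc n) \<longleftrightarrow> u \<in> perms n"
proof
  assume h: "u @ [Suc n] \<in> perms (Suc n)"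
  then have d: "distinct u" "Suc n \<notin> set u" and s: "insert (Suc n) (set u) = {1..Suc n}"
    by (auto simp: perms_def)
  have "set u = {1..Suc n} - {Suc n}" using d(2) s by blast
  also have "\<dots> = {1..n}" by auto
  finally show "u \<in> perms n" using d by (simp add: perms_def)
next
  assume "u \<in> perms n"
  then show "u @ [Suc n] \<in> perms (Suc n)" by (auto simp: perms_def)
qed

lemma perms_cons: "Suc n # u \<in> perms (Suc n) \<longleftrightarrow> u \<in> perms n"
proof
  assume h: "Suc n # u \<in> perms (Suc n)"
  then have d: "distinct u" "Suc n \<notin> set u" and s: "insert (Suc n) (set u) = {1..Suc n}"
    by (auto simp: perms_def)
  have "set u = {1..Suc n} - {Suc n}" using d(2) s by blast
  also have "\<dots> = {1..n}" by auto
  finally show "u \<in> perms n" using d by (simp add: perms_def)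
next
  assume "u \<in> perms n"
  then show "Suc n # u \<in> perms (Suc n)" by (auto simp: perms_def)
qed

lemma perms_three: "w \<in> perms m \<Longrightarrow> 1 # Suc (Suc m) # map Suc w \<in> perms (Suc (Suc m))"
proof -
  assume "w \<in> perms m"
  then have d: "distinct w" and s: "set w = {1..m}" by (auto simp: perms_def)
  have sm: "set (map Suc w) = {2..Suc m}" using s by simp
  have "distinct (1 # Suc (Suc m) # map Suc w)" using d sm by (auto simp: distinct_map)
  moreover have "set (1 # Suc (Suc m) # map Suc w) = {1..Suc (Suc m)}"
    using sm by auto
  ultimately show ?thesis by (simp add: perms_def)
qed

lemma P_sub:
  assumes "subseq q p" "\<not> P231 p" "\<not> P1243 p" "\<not> P2143 p"
  shows "\<not> P231 q" "\<not> P1243 q" "\<not> P2143 q"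
  using assms P_trans by blast+

lemma decompA:
  assumes "p \<in> AA (Suc n)"
  shows "(\<exists>u\<in>AA n. p = u@[Suc n]) \<or> (\<exists>v\<in>AA n. p = Suc n # v)
     \<or> (\<exists>w\<in>CC (n-1). w \<noteq> [] \<and> p = 1 # Suc n # map Suc w)"
proof -
  have pp: "p \<in> perms (Suc n)" and n1: "\<not> P1243 p" and n2: "\<not> P2143 p" and n3: "\<not> P231 p"
    using assms unfolding memA by simp_all
  have dp: "distinct p" and sp: "set p = {1..Suc n}" using pp by (simp_all add: perms_def)
  then have "Suc n \<in> set p" by simp
  from split_list[OF this] obtain u v where p: "p = u @ Suc n # v" by blast
  have hu: "Suc n \<notin> set u" and hv: "Suc n \<notin> set v" and disj: "set u \<inter> set v = {}"
    and du: "distinct u" and dv: "distinct v"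
  proof -
    have dd: "distinct u \<and> Suc n \<notin> set v \<and> distinct v \<and> set u \<inter> insert (Suc n) (set v) = {}"
      using dp p by simp
    then show "Suc n \<notin> set u" "Suc n \<notin> set v" "set u \<inter> set v = {}" "distinct u" "distinct v"
      by blast+
  qed
  have suv: "set u \<union> set v = {1..n}"
  proof -
    have sp2: "set p = insert (Suc n) (set u \<union> set v)" by (simp add: p)
    have "set u \<union> set v = set p - {Suc n}" using sp2 hu hv by blast
    also have "\<dots> = {1..Suc n} - {Suc n}" using sp by simp
    also have "\<dots> = {1..n}" by auto
    finally show ?thesis .
  qed
  have sep: "x < y" if x: "x \<in> set u" and y: "y \<in> set v" for x y
  proof (rule ccontr)
    assume "\<not> x < y"
    moreover have "x \<noteq> y" using disj x y by blast
    ultimately have yx: "y < x" by simp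
    have "subseq [x] u" using x by (simp add: subseq_singleton_left)
    moreover have "subseq [Suc n, y] (Suc n # v)" using y by (simp add: subseq_singleton_left)
    ultimately have "subseq ([x] @ [Suc n, y]) (u @ Suc n # v)" by (rule list_emb_append_mono)
    then have sq: "subseq [x, Suc n, y] p" using p by simp
    have "x \<in> {1..n}" using x suv by blast
    then have "x < Suc n" by simp
    then have "P231 p" using yx sq unfolding P231_def
      by (intro exI[of _ x] exI[of _ "Suc n"] exI[of _ y]) simp
    then show False using n3 by simp
  qed
  show ?thesis
  proof (cases "v = []")
    case True
    then have pu: "p = u @ [Suc n]" using p by simp
    then have "u \<in> perms n" using pp perms_snoc by simp
    moreover have "subseq u p" unfolding pu by (rule subseq_rev_drop_many) (rule subseq_order.order_refl)
    ultimately have "u \<in> AA n" using P_sub[OF _ n3 n1 n2] unfolding memA by simp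
    then show ?thesis using pu by (intro disjI1 bexI[of _ u])
  next
    case vne: False
    show ?thesis
    proof (cases u)
      case Nil
      then have pv: "p = Suc n # v" using p by simp
      then have "v \<in> perms n" using pp perms_cons by simp
      moreover have "subseq v p" unfolding pv by (rule list_emb_Cons) (rule subseq_order.order_refl)
      ultimately have "v \<in> AA n" using P_sub[OF _ n3 n1 n2] unfolding memA by simp
      then show ?thesis using pv by (intro disjI2 disjI1 bexI[of _ v])
    next
      case (Cons x1 u1)
      show ?thesis
      proof (cases u1)
        case Nil
        with Cons have ux: "u = [x1]" by simp
        have xl: "x1 < y" if "y \<in> set v" for y using sep that ux by simp
        obtain y0 where y0: "y0 \<in> set v" using vne by (cases v) auto
        then have "y0 \<in> {1..n}" using suv by auto
        then have "1 \<in> set u \<union> set v" using suv by auto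
        moreover have "1 \<notin> set v"
        proof
          assume "1 \<in> set v"
          then have "x1 < 1" by (rule xl)
          moreover have "x1 \<in> {1..n}" using suv ux by auto
          ultimately show False by simp
        qed
        ultimately have x1: "x1 = 1" using ux by simp
        have sv: "set v = {2..n}"
        proof -
          have "set v = {1..n} - set u" using suv disj by blast
          also have "\<dots> = {2..n}" using ux x1 by auto
          finally show ?thesis .
        qed
        define w where "w = map (\<lambda>y. y - 1) v"
        have vw: "map Suc w = v" unfolding w_def map_map
          by (rule map_idI) (use sv in auto)
        have pw: "p = 1 # Suc n # map Suc w" using p ux x1 vw by simp
        have wne: "w \<noteq> []" using vne w_def by simp
        have dw: "distinct w" using dv vw by (metis distinct_map)
        have sw: "set w = {1..n-1}"
        proof
          show "set w \<subseteq> {1..n-1}"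
          proof
            fix z assume "z \<in> set w"
            then have "Suc z \<in> set v" using vw by force
            then show "z \<in> {1..n-1}" using sv by auto
          qed
          show "{1..n-1} \<subseteq> set w"
          proof
            fix z assume "z \<in> {1..n-1}"
            then have "Suc z \<in> set v" using sv by auto
            then have "Suc z \<in> Suc ` set w" using vw by (metis list.set_map)
            then show "z \<in> set w" by auto
          qed
        qed
        have wp: "w \<in> perms (n-1)" using dw sw by (simp add: perms_def)
        have "subseq v p" unfolding p by (rule subseq_drop_many, rule list_emb_Cons, rule subseq_order.order_refl)
        have w231: "\<not> P231 w"
        proof
          assume "P231 w"
          then have "P231 v" using map_Suc_P(1) vw by metis
          then show False using P_trans(1)[OF \<open>subseq v p\<close>] n3 by blast
        qed
        have w132: "\<not> P132 w"
        proof
          assume "P132 w"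
          then obtain a b c where h: "subseq [a,b,c] w" "a < c" "c < b" unfolding P132_def by blast
          have "subseq (map Suc [a,b,c]) (map Suc w)" by (rule subseq_map) (rule h(1))
          then have "subseq [Suc a, Suc b, Suc c] (map Suc w)" by simp
          then have "subseq [Suc a, Suc b, Suc c] (Suc n # map Suc w)" by (rule list_emb_Cons)
          then have "subseq [1, Suc a, Suc b, Suc c] p" using pw by simp
          moreover have "a \<in> set w" using h(1) subseq_set by fastforce
          then have "1 < Suc a" using sw by auto
          ultimately have "P1243 p" using h unfolding P1243_def
            by (intro exI[of _ 1] exI[of _ "Suc a"] exI[of _ "Suc b"] exI[of _ "Suc c"]) simp
          then show False using n1 by simp
        qed
        have "w \<in> CC (n-1)" using wp w231 w132 unfolding memC by simp
        then show ?thesis using pw wne by (intro disjI2 bexI[of _ w] conjI)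
      next
        case (Cons x2 u2)
        with \<open>u = x1 # u1\<close> have ux: "u = x1 # x2 # u2" by simp
        obtain y where y: "y \<in> set v" using vne by (cases v) auto
        have "subseq [x1, x2] u" using ux by simp
        moreover have "subseq [Suc n, y] (Suc n # v)" using y by (simp add: subseq_singleton_left)
        ultimately have "subseq ([x1, x2] @ [Suc n, y]) (u @ Suc n # v)" by (rule list_emb_append_mono)
        then have sq: "subseq [x1, x2, Suc n, y] p" using p by simp
        have l: "x1 < y" "x2 < y" using sep y ux by auto
        have "y \<in> {1..n}" using y suv by blast
        then have "y < Suc n" by simp
        have "x1 \<noteq> x2" using du ux by auto
        then have "P1243 p \<or> P2143 p"
        proof (cases "x1 < x2")
          case True
          then have "P1243 p" unfolding P1243_def using sq l \<open>y < Suc n\<close>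
            by (intro exI[of _ x1] exI[of _ x2] exI[of _ "Suc n"] exI[of _ y]) simp
          then show ?thesis by simp
        next
          case False
          then have "x2 < x1" using \<open>x1 \<noteq> x2\<close> by simp
          then have "P2143 p" unfolding P2143_def using sq l \<open>y < Suc n\<close>
            by (intro exI[of _ x1] exI[of _ x2] exI[of _ "Suc n"] exI[of _ y]) simp
          then show ?thesis by simp
        qed
        then show ?thesis using n1 n2 by simp
      qed
    qed
  qed
qed




lemma map_Suc_231_inv: "P231 (map Suc w) \<Longrightarrow> P231 w"
  unfolding P231_def
proof (elim exE conjE)
  fix a b c assume h: "subseq [a,b,c] (map Suc w)" "c < a" "a < b"
  obtain zs where zs: "subseq zs w" "[a,b,c] = map Suc zs" using subseq_map_inv[OF h(1)] by (elim exE conjE)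
  have "length zs = 3" using arg_cong[OF zs(2), of length] by simp
  then obtain a' b' c' where zz: "zs = [a',b',c']" unfolding len3 by (elim exE)
  with zs have e: "a = Suc a'" "b = Suc b'" "c = Suc c'" by simp_all
  have "subseq [a',b',c'] w" using zs zz by simp
  moreover have "c' < a'" "a' < b'" using h e by simp_all
  ultimately show "\<exists>a b c. subseq [a,b,c] w \<and> c < a \<and> a < b" by blast
qed

lemma perms_lt: "u \<in> perms n \<Longrightarrow> \<forall>x\<in>set u. x < Suc n"
  by (auto simp: perms_def)

lemma compA1: "u \<in> AA n \<Longrightarrow> u @ [Suc n] \<in> AA (Suc n)"
  unfolding memA using perms_snoc snoc_max[OF perms_lt] by blast

lemma compA2: "v \<in> AA n \<Longrightarrow> Suc n # v \<in> AA (Suc n)"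
  unfolding memA using perms_cons cons_max[OF perms_lt] by blast

lemma compC1: "u \<in> CC n \<Longrightarrow> u @ [Suc n] \<in> CC (Suc n)"
  unfolding memC using perms_snoc snoc_max[OF perms_lt] by blast

lemma compC2: "v \<in> CC n \<Longrightarrow> Suc n # v \<in> CC (Suc n)"
  unfolding memC using perms_cons cons_max[OF perms_lt] by blast

lemma compA3:
  assumes w: "w \<in> CC (n-1)" and wne: "w \<noteq> []"
  shows "1 # Suc n # map Suc w \<in> AA (Suc n)"
proof -
  have wp: "w \<in> perms (n-1)" and w1: "\<not> P132 w" and w2: "\<not> P231 w" using w unfolding memC by simp_all
  have sw: "set w = {1..n-1}" using wp by (simp add: perms_def)
  obtain a0 where "a0 \<in> set w" using wne by (cases w) auto
  then have "a0 \<in> {1..n-1}" using sw by simp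
  then have "n \<ge> 2" by auto
  then obtain m where m: "n = Suc m" and "m \<ge> 1" by (cases n) auto
  have pp: "1 # Suc n # map Suc w \<in> perms (Suc n)" using perms_three[of w "n-1"] wp m by simp
  define q where "q = Suc n # map Suc w"
  have qmax: "\<forall>x\<in>set (map Suc w). x < Suc n" using sw by auto
  have qmin: "\<forall>x\<in>set q. 1 < x" using sw m by (auto simp: q_def)
  have "\<not> P231 (map Suc w)" using w2 map_Suc_231_inv by blast
  then have "\<not> P231 q" unfolding q_def using cons_max(1)[OF qmax] by blast
  then have a1: "\<not> P231 (1 # q)" using cons_min231[OF qmin] by blast
  have "\<not> P132 (map Suc w)" using w1 map_Suc_P(2) by blast
  then have "\<not> P132 q" unfolding q_def using cons_max(2)[OF qmax] by blast
  then have "\<not> P1243 (1 # q)" "\<not> P2143 (1 # q)" using cons_4 by blast+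
  then show ?thesis using pp a1 unfolding memA q_def by simp
qed

lemma decompC:
  assumes "p \<in> CC (Suc n)"
  shows "(\<exists>u\<in>CC n. p = u@[Suc n]) \<or> (\<exists>v\<in>CC n. p = Suc n # v)"
proof -
  have pp: "p \<in> perms (Suc n)" and n1: "\<not> P132 p" and n3: "\<not> P231 p"
    using assms unfolding memC by simp_all
  have dp: "distinct p" and sp: "set p = {1..Suc n}" using pp by (simp_all add: perms_def)
  then have "Suc n \<in> set p" by simp
  from split_list[OF this] obtain u v where p: "p = u @ Suc n # v" by blast
  have hu: "Suc n \<notin> set u" and hv: "Suc n \<notin> set v" and disj: "set u \<inter> set v = {}"
  proof -
    have dd: "distinct u \<and> Suc n \<notin> set v \<and> distinct v \<and> set u \<inter> insert (Suc n) (set v) = {}"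
      using dp p by simp
    then show "Suc n \<notin> set u" "Suc n \<notin> set v" "set u \<inter> set v = {}"
      by blast+
  qed
  have suv: "set u \<union> set v = {1..n}"
  proof -
    have sp2: "set p = insert (Suc n) (set u \<union> set v)" by (simp add: p)
    have "set u \<union> set v = set p - {Suc n}" using sp2 hu hv by blast
    also have "\<dots> = {1..Suc n} - {Suc n}" using sp by simp
    also have "\<dots> = {1..n}" by auto
    finally show ?thesis .
  qed
  show ?thesis
  proof (cases "u = [] \<or> v = []")
    case True
    then show ?thesis
    proof
      assume u: "u = []"
      then have pv: "p = Suc n # v" using p by simp
      then have "v \<in> perms n" using pp perms_cons by simp
      moreover have "subseq v p" unfolding pv by (rule list_emb_Cons) (rule subseq_order.order_refl)
      ultimately have "v \<in> CC n" using P_trans(1,2) n1 n3 unfolding memC by blast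
      then show ?thesis using pv by (intro disjI2 bexI[of _ v])
    next
      assume v: "v = []"
      then have pu: "p = u @ [Suc n]" using p by simp
      then have "u \<in> perms n" using pp perms_snoc by simp
      moreover have "subseq u p" unfolding pu by (rule subseq_rev_drop_many) (rule subseq_order.order_refl)
      ultimately have "u \<in> CC n" using P_trans(1,2) n1 n3 unfolding memC by blast
      then show ?thesis using pu by (intro disjI1 bexI[of _ u])
    qed
  next
    case False
    then obtain x y where x: "x \<in> set u" and y: "y \<in> set v" by (cases u; cases v) auto
    have "x \<noteq> y" using disj x y by blast
    have "subseq [x] u" using x by (simp add: subseq_singleton_left)
    moreover have "subseq [Suc n, y] (Suc n # v)" using y by (simp add: subseq_singleton_left)
    ultimately have "subseq ([x] @ [Suc n, y]) (u @ Suc n # v)" by (rule list_emb_append_mono)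
    then have sq: "subseq [x, Suc n, y] p" using p by simp
    have "x \<in> {1..n}" "y \<in> {1..n}" using x y suv by blast+
    then have xy: "x < Suc n" "y < Suc n" by simp_all
    show ?thesis
    proof (cases "x < y")
      case True
      then have "P132 p" unfolding P132_def using sq xy
        by (intro exI[of _ x] exI[of _ "Suc n"] exI[of _ y]) simp
      then show ?thesis using n1 by simp
    next
      case False
      then have "y < x" using \<open>x \<noteq> y\<close> by simp
      then have "P231 p" unfolding P231_def using sq xy
        by (intro exI[of _ x] exI[of _ "Suc n"] exI[of _ y]) simp
      then show ?thesis using n3 by simp
    qed
  qed
qed




lemma A_eq: "AA (Suc n) = (\<lambda>u. u @ [Suc n]) ` AA n \<union> Cons (Suc n) ` AA n
   \<union> (\<lambda>w. 1 # Suc n # map Suc w) ` {w \<in> CC (n-1). w \<noteq> []}"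
proof
  show "AA (Suc n) \<subseteq> (\<lambda>u. u @ [Suc n]) ` AA n \<union> Cons (Suc n) ` AA n
   \<union> (\<lambda>w. 1 # Suc n # map Suc w) ` {w \<in> CC (n-1). w \<noteq> []}"
  proof
    fix p assume "p \<in> AA (Suc n)"
    from decompA[OF this] show "p \<in> (\<lambda>u. u @ [Suc n]) ` AA n \<union> Cons (Suc n) ` AA n
   \<union> (\<lambda>w. 1 # Suc n # map Suc w) ` {w \<in> CC (n-1). w \<noteq> []}"
      by blast
  qed
  show "(\<lambda>u. u @ [Suc n]) ` AA n \<union> Cons (Suc n) ` AA n
   \<union> (\<lambda>w. 1 # Suc n # map Suc w) ` {w \<in> CC (n-1). w \<noteq> []} \<subseteq> AA (Suc n)"
    using compA1 compA2 compA3 by blast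
qed

lemma C_eq: "CC (Suc n) = (\<lambda>u. u @ [Suc n]) ` CC n \<union> Cons (Suc n) ` CC n"
proof
  show "CC (Suc n) \<subseteq> (\<lambda>u. u @ [Suc n]) ` CC n \<union> Cons (Suc n) ` CC n"
  proof
    fix p assume "p \<in> CC (Suc n)"
    from decompC[OF this] show "p \<in> (\<lambda>u. u @ [Suc n]) ` CC n \<union> Cons (Suc n) ` CC n"
      by blast
  qed
  show "(\<lambda>u. u @ [Suc n]) ` CC n \<union> Cons (Suc n) ` CC n \<subseteq> CC (Suc n)"
    using compC1 compC2 by blast
qed

lemma finite_perms: "finite (perms n)"
proof -
  have "perms n \<subseteq> {xs. set xs \<subseteq> {1..n} \<and> length xs = n}"
    by (auto simp: perms_def dest: distinct_card[symmetric])
  moreover have "finite {xs. set xs \<subseteq> {1..n} \<and> length xs = n}"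
    by (rule finite_lists_length_eq) simp
  ultimately show ?thesis by (rule finite_subset)
qed

lemma finite_Av: "finite (Av n R)"
  by (rule finite_subset[OF _ finite_perms[of n]]) (auto simp: Av_def)

lemma perms_0: "perms 0 = {[]}"
  by (auto simp: perms_def)

lemma P_Nil: "\<not> P231 []" "\<not> P132 []" "\<not> P1243 []" "\<not> P2143 []"
  by (auto simp: P231_def P132_def P1243_def P2143_def)

lemma AA0: "AA 0 = {[]}"
  unfolding set_eq_iff memA perms_0 using P_Nil by auto
lemma CC0: "CC 0 = {[]}"
  unfolding set_eq_iff memC perms_0 using P_Nil by auto

lemma Nil_perms: "n \<ge> 1 \<Longrightarrow> [] \<notin> perms n"
  by (auto simp: perms_def)

lemma AA_Nil: "n \<ge> 1 \<Longrightarrow> [] \<notin> AA n"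
  using Nil_perms unfolding memA by blast
lemma CC_Nil: "n \<ge> 1 \<Longrightarrow> [] \<notin> CC n"
  using Nil_perms unfolding memC by blast

lemma disj12:
  assumes "n \<ge> 1" shows "(\<lambda>u. u @ [Suc n]) ` Av n R \<inter> Cons (Suc n) ` Av n R = {}"
proof -
  have False if u: "u \<in> Av n R" and v: "u @ [Suc n] = Suc n # v" for u v
  proof -
    have "set u = {1..n}" using u by (simp add: Av_def perms_def)
    then have "u \<noteq> []" using assms by auto
    then obtain a u' where "u = a # u'" by (cases u) auto
    then have "a = Suc n" "a \<in> set u" using v by auto
    then show False using \<open>set u = {1..n}\<close> by auto
  qed
  then show ?thesis by blast
qed

lemma disj13:
  "(\<lambda>u. u @ [Suc n]) ` Av n R \<inter> (\<lambda>w. 1 # Suc n # map Suc w) ` {w \<in> CC (n-1). w \<noteq> []} = {}"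
proof -
  have False if w: "w \<in> CC (n-1)" "w \<noteq> []" and e: "u @ [Suc n] = 1 # Suc n # map Suc w" for u w
  proof -
    have "set w = {1..n-1}" using w unfolding memC by (simp add: perms_def)
    have "last (u @ [Suc n]) = last (1 # Suc n # map Suc w)" using e by simp
    then have "Suc n = Suc (last w)" using w(2) by (simp add: last_map)
    moreover have "last w \<in> set w" using w(2) by simp
    ultimately show False using \<open>set w = {1..n-1}\<close> by auto
  qed
  then show ?thesis by blast
qed

lemma disj23:
  assumes "n \<ge> 1"
  shows "Cons (Suc n) ` Av n R \<inter> (\<lambda>w. 1 # Suc n # map Suc w) ` {w \<in> CC (n-1). w \<noteq> []} = {}"
  using assms by auto

lemma cardA: "n \<ge> 1 \<Longrightarrow> card (AA (Suc n)) = 2 * card (AA n) + card {w \<in> CC (n-1). w \<noteq> []}"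
proof -
  assume n: "n \<ge> 1"
  have i1: "inj_on (\<lambda>u. u @ [Suc n]) X" for X :: "nat list set" by (simp add: inj_on_def)
  have i2: "inj_on (Cons (Suc n)) X" for X :: "nat list set" by (simp add: inj_on_def)
  have i3: "inj_on (\<lambda>w. 1 # Suc n # map Suc w) X" for X :: "nat list set"
    by (simp add: inj_on_def inj_map_eq_map)
  have f: "finite (AA n)" "finite {w \<in> CC (n-1). w \<noteq> []}" using finite_Av by auto
  have "card (AA (Suc n)) = card ((\<lambda>u. u @ [Suc n]) ` AA n \<union> Cons (Suc n) ` AA n)
     + card ((\<lambda>w. 1 # Suc n # map Suc w) ` {w \<in> CC (n-1). w \<noteq> []})"
    unfolding A_eq
  proof (rule card_Un_disjoint)
    show "finite ((\<lambda>u. u @ [Suc n]) ` AA n \<union> Cons (Suc n) ` AA n)" using f by simp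
    show "finite ((\<lambda>w. 1 # Suc n # map Suc w) ` {w \<in> CC (n-1). w \<noteq> []})" using f by simp
    have "((\<lambda>u. u @ [Suc n]) ` AA n \<union> Cons (Suc n) ` AA n) \<inter> (\<lambda>w. 1 # Suc n # map Suc w) ` {w \<in> CC (n-1). w \<noteq> []}
      = ((\<lambda>u. u @ [Suc n]) ` AA n \<inter> (\<lambda>w. 1 # Suc n # map Suc w) ` {w \<in> CC (n-1). w \<noteq> []})
        \<union> (Cons (Suc n) ` AA n \<inter> (\<lambda>w. 1 # Suc n # map Suc w) ` {w \<in> CC (n-1). w \<noteq> []})"
      by (rule Int_Un_distrib2)
    also have "\<dots> = {}" using disj13[of n] disj23[OF n] by (simp only: Un_empty)
    finally show "((\<lambda>u. u @ [Suc n]) ` AA n \<union> Cons (Suc n) ` AA n) \<inter> (\<lambda>w. 1 # Suc n # map Suc w) ` {w \<in> CC (n-1). w \<noteq> []} = {}" .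
  qed
  also have "card ((\<lambda>u. u @ [Suc n]) ` AA n \<union> Cons (Suc n) ` AA n) = card (AA n) + card (AA n)"
    using card_Un_disjoint[of "(\<lambda>u. u @ [Suc n]) ` AA n" "Cons (Suc n) ` AA n"] f disj12[OF n]
      card_image[OF i1] card_image[OF i2] by simp
  also have "card ((\<lambda>w. 1 # Suc n # map Suc w) ` {w \<in> CC (n-1). w \<noteq> []}) = card {w \<in> CC (n-1). w \<noteq> []}"
    by (rule card_image[OF i3])
  finally show ?thesis by simp
qed

lemma cardC: "n \<ge> 1 \<Longrightarrow> card (CC (Suc n)) = 2 * card (CC n)"
proof -
  assume n: "n \<ge> 1"
  have i1: "inj_on (\<lambda>u. u @ [Suc n]) X" for X :: "nat list set" by (simp add: inj_on_def)
  have i2: "inj_on (Cons (Suc n)) X" for X :: "nat list set" by (simp add: inj_on_def)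
  have f: "finite (CC n)" using finite_Av by auto
  show ?thesis unfolding C_eq
    using card_Un_disjoint[of "(\<lambda>u. u @ [Suc n]) ` CC n" "Cons (Suc n) ` CC n"] f disj12[OF n]
      card_image[OF i1] card_image[OF i2] by simp
qed

lemma CC1: "CC 1 = {[1]}"
  using C_eq[of 0] CC0[simplified] by simp

lemma AA1: "AA 1 = {[1]}"
  using A_eq[of 0] AA0[simplified] CC0[simplified] by simp

lemma cardC_closed: "n \<ge> 1 \<Longrightarrow> card (CC n) = 2 ^ (n - 1)"
proof (induction n rule: dec_induct)
  case base then show ?case by (simp add: CC1[simplified])
next
  case (step n) then show ?case using cardC[of n] by (cases n) auto
qed

lemma cardA_closed: "n \<ge> 2 \<Longrightarrow> 8 * card (AA n) = (n + 2) * 2 ^ n"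
proof (induction n rule: dec_induct)
  case base
  have "card (AA 2) = 2 * card (AA 1) + card {w \<in> CC 0. w \<noteq> []}"
    using cardA[of 1] by (simp add: numeral_2_eq_2)
  also have "\<dots> = 2" by (simp add: AA1[simplified] CC0[simplified])
  finally show ?case by simp
next
  case (step n)
  have "n - 1 \<ge> 1" using step(1) by simp
  then have "[] \<notin> CC (n-1)" by (rule CC_Nil)
  then have "{w \<in> CC (n-1). w \<noteq> []} = CC (n-1)" by blast
  then have "card (AA (Suc n)) = 2 * card (AA n) + 2 ^ (n - 2)"
    using cardA[of n] cardC_closed[of "n-1"] step(1) by simp
  then have "8 * card (AA (Suc n)) = 2 * (8 * card (AA n)) + 8 * 2 ^ (n - 2)" by simp
  also have "\<dots> = 2 * ((n + 2) * 2 ^ n) + 2 ^ (n + 1)"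
  proof -
    obtain k where k: "n = k + 2" using step(1) by (metis add.commute le_Suc_ex)
    have e: "8 * 2^(n-2) = (2::nat)^(n+1)" by (simp add: k)
    show ?thesis using step(3) e by simp
  qed
  also have "\<dots> = (Suc n + 2) * 2 ^ Suc n" by simp
  finally show ?case .
qed




lemma fps_part:
  fixes a :: "nat \<Rightarrow> rat"
  assumes a0: "a 0 = 1" and a1: "a 1 = 1" and a2: "a 2 = 2" and a3: "a 3 = 5"
    and rec: "\<And>k. k \<ge> 4 \<Longrightarrow> a k - 4 * a (k-1) + 4 * a (k-2) = 0"
  shows "Abs_fps a = 1 + fps_X * (fps_X - 1)^2 / (2 * fps_X - 1)^2"
proof -
  define G where "G = Abs_fps a - 1"
  have Gn: "fps_nth G k = a k - (if k = 0 then 1 else 0)" for k by (simp add: G_def)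
  have c4: "fps_const (4::rat) = 4" by (simp add: numeral_fps_const)
  have c2: "fps_const (2::rat) = 2" by (simp add: numeral_fps_const)
  have e1: "G * (2 * fps_X - 1)^2 = G - fps_const 4 * (fps_X * G) + fps_const 4 * (fps_X^2 * G)"
    unfolding c4 by (simp add: power2_eq_square algebra_simps)
  have e2: "fps_X * (fps_X - 1)^2 = fps_X^3 - fps_const 2 * fps_X^2 + (fps_X :: rat fps)"
    unfolding c2 by (simp add: power2_eq_square power3_eq_cube algebra_simps)
  have key': "G - fps_const 4 * (fps_X * G) + fps_const 4 * (fps_X^2 * G)
      = fps_X^3 - fps_const 2 * fps_X^2 + (fps_X :: rat fps)"
  proof (rule fps_ext)
    fix k
    show "fps_nth (G - fps_const 4 * (fps_X * G) + fps_const 4 * (fps_X^2 * G)) k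
      = fps_nth (fps_X^3 - fps_const 2 * fps_X^2 + (fps_X :: rat fps)) k"
    proof (cases "k \<ge> 4")
      case True
      then have "fps_nth (G - fps_const 4 * (fps_X * G) + fps_const 4 * (fps_X^2 * G)) k
          = a k - 4 * a (k-1) + 4 * a (k-2)"
        by (simp add: fps_X_power_mult_nth Gn)
      also have "\<dots> = 0" using rec True by simp
      finally show ?thesis using True by simp
    next
      case False
      have a': "a (Suc 0) = 1" "a (Suc (Suc 0)) = 2" "a (Suc (Suc (Suc 0))) = 5"
        using a1 a2 a3 by (simp_all add: numeral_2_eq_2 numeral_3_eq_3)
      from False have "k = 0 \<or> k = 1 \<or> k = 2 \<or> k = 3" by auto
      then show ?thesis
        by (elim disjE) (simp_all add: fps_X_power_mult_nth Gn a0 a1 a2 a3 a')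
    qed
  qed
  have key: "G * (2 * fps_X - 1)^2 = fps_X * (fps_X - 1)^2"
    unfolding e1 e2 by (rule key')
  have nz: "(2 * fps_X - 1)^2 \<noteq> (0 :: rat fps)"
  proof
    assume "(2 * fps_X - 1)^2 = (0 :: rat fps)"
    then have "(2 * fps_X - 1 :: rat fps) = 0" by simp
    then have "fps_nth (2 * fps_X - 1 :: rat fps) 0 = 0" by simp
    then show False by simp
  qed
  have "fps_X * (fps_X - 1)^2 / (2 * fps_X - 1)^2 = G"
    unfolding key[symmetric] using nz by simp
  then show ?thesis by (simp add: G_def)
qed

lemma div8: "8 * (x::rat) = y \<Longrightarrow> x = y / 8" by simp

lemma cl: "n \<ge> 2 \<Longrightarrow> (of_nat (card (AA n)) :: rat) = of_nat (n + 2) * 2 ^ n / 8"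
proof -
  assume n: "n \<ge> 2"
  have "(of_nat (8 * card (AA n)) :: rat) = of_nat ((n + 2) * 2 ^ n)" using cardA_closed[OF n] by (rule arg_cong)
  then have "8 * (of_nat (card (AA n)) :: rat) = of_nat (n + 2) * 2 ^ n" by (simp only: of_nat_mult of_nat_power of_nat_numeral)
  then show ?thesis by (rule div8)
qed

lemma rec_step:
  fixes x y z :: rat
  assumes "x = of_nat (j + 6) * 2 ^ (j + 4) / 8" "y = of_nat (j + 5) * 2 ^ (j + 3) / 8"
    "z = of_nat (j + 4) * 2 ^ (j + 2) / 8"
  shows "x - 4 * y + 4 * z = 0"
  using assms by (simp add: power_add algebra_simps)

lemma powi_part: "(2::rat) powi (int n - 3) = 2 ^ n / 8"
proof -
  have "(2::rat) powi (int n - 3) = 2 powi (int n) / 2 powi 3"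
    by (rule power_int_diff) simp
  also have "\<dots> = 2 ^ n / 8" by (simp add: power_int_numeral)
  finally show ?thesis .
qed

theorem mainTheorem11:
  shows "Abs_fps (\<lambda>n. of_nat (card (Av n {[1,2,4,3],[2,1,4,3],[2,3,1]})) :: rat)
           = 1 + fps_X * (fps_X - 1)^2 / (2 * fps_X - 1)^2
         \<and> (\<forall>n\<ge>2. (of_nat (card (Av n {[1,2,4,3],[2,1,4,3],[2,3,1]})) :: rat) = of_nat (n + 2) * 2 powi (int n - 3))"
proof (rule conjI)
  show "Abs_fps (\<lambda>n. of_nat (card (Av n {[1,2,4,3],[2,1,4,3],[2,3,1]})) :: rat)
           = 1 + fps_X * (fps_X - 1)^2 / (2 * fps_X - 1)^2"
  proof (rule fps_part)
    show "(of_nat (card (AA 0)) :: rat) = 1" by (simp add: AA0[simplified])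
    show "(of_nat (card (AA 1)) :: rat) = 1" by (simp add: AA1[simplified])
    show "(of_nat (card (AA 2)) :: rat) = 2" using cl[of 2] by simp
    show "(of_nat (card (AA 3)) :: rat) = 5" using cl[of 3] by simp
    fix k :: nat assume k: "k \<ge> 4"
    then obtain j where j: "k = j + 4" by (metis add.commute le_Suc_ex)
    show "(of_nat (card (AA k)) :: rat) - 4 * of_nat (card (AA (k-1))) + 4 * of_nat (card (AA (k-2))) = 0"
    proof (rule rec_step)
      show "(of_nat (card (AA k)) :: rat) = of_nat (j + 6) * 2 ^ (j + 4) / 8"
        using cl[of k] j by simp
      show "(of_nat (card (AA (k-1))) :: rat) = of_nat (j + 5) * 2 ^ (j + 3) / 8"
        using cl[of "k-1"] j by (simp add: eval_nat_numeral)
      show "(of_nat (card (AA (k-2))) :: rat) = of_nat (j + 4) * 2 ^ (j + 2) / 8"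
        using cl[of "k-2"] j by simp
    qed
  qed
  show "\<forall>n\<ge>2. (of_nat (card (Av n {[1,2,4,3],[2,1,4,3],[2,3,1]})) :: rat) = of_nat (n + 2) * 2 powi (int n - 3)"
  proof (intro allI impI)
    fix n :: nat assume n: "n \<ge> 2"
    show "(of_nat (card (AA n)) :: rat) = of_nat (n + 2) * 2 powi (int n - 3)"
      unfolding powi_part cl[OF n] by simp
  qed
qed


end
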